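(* Let $(\mathfrak M,\mathscr A)$ be a quasi-differentiable Banach manifold (modelled on $X$) with $C^1$-kernel $\mathfrak M_0$ (modelled on $X_0$) and inner $C^1$-kernel $\mathfrak M_1$, and let $\eta\in\mathfrak M_1$. Then for any two charts $(\mathcal U,\varphi),(\mathcal V,\psi)\in\mathscr A$ with $\eta\in\mathcal U\cap\mathcal V$, $\mathcal T^0_{\eta,\varphi}(\mathfrak M)=\mathcal T^0_{\eta,\psi}(\mathfrak M)$. Consequently, for every chart $(\mathcal U,\varphi)\in\mathscr A$ with $\eta\in\mathcal U$, $\mathcal T^0_\eta(\mathfrak M)=\mathcal T^0_{\eta,\varphi}(\mathfrak M)$ and $\varphi'(\eta)\mathcal T^0_\eta(\mathfrak M)=X_0$.
   Context: Densely embedded spaces and the class $\mathfrak C^k$. For Banach spaces $X$ and $X_0$, $X_0$ is a densely embedded Banach subspace of $X$ if $X_0$ is a dense linear subspace of $X$ and there is $C>0$ with $\|x\|_X\le C\|x\|_{X_0}$ for $x\in X_0$. For such $X_0\subseteq X$, a Banach space $Y$, an open set $U_0\subseteq X_0$ and an integer $k\ge1$, $\mathfrak C^k(U_0;X,Y)$ denotes the set of maps $F:U_0\to Y$ such that (i) for each $x_0\in U_0$ there are bounded symmetric $j$-linear maps $F^{(j)}(x_0):X^j\to Y$, $1\le j\le k$, with $\|F(x)-F(x_0)-\sum_{j=1}^k\frac1{j!}F^{(j)}(x_0)(x-x_0,\dots,x-x_0)\|_Y/\|x-x_0\|_{X_0}^k\to0$ as $\|x-x_0\|_{X_0}\to0$,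 and (ii) $x\mapsto F^{(j)}(x)$ is continuous from $U_0$ (with the $X_0$-topology) into the space $L^j(X,Y)$ of bounded $j$-linear maps. We write $F'=F^{(1)}$. Embedded submanifolds and quasi-differentiable manifolds. Let $\mathfrak M,\mathfrak M_0$ be topological Banach manifolds modelled on $X$, $X_0$, let $\mathscr A$ be a family of local charts of $\mathfrak M$, and $k\ge1$. $\mathfrak M_0$ is a $C^k$-embedded Banach submanifold of $\mathfrak M$ with respect to $\mathscr A$ if: (D1) $X_0$ is a densely embedded Banach subspace of $X$; (D2) $\mathfrak M_0\subseteq\mathfrak M$ and $\mathcal U\cap\mathfrak M_0$ is open in $\mathfrak M_0$ for every open $\mathcal U\subseteq\mathfrak M$; (D3) the domains of the charts of $\mathscr A$ cover $\mathfrak M$; (D4) for $\eta\in\mathfrak M_0$ and $(\mathcal U,\varphi)\in\mathscr A$ with $\eta\in\mathcal U$, $(\mathcal U_0,\varphi|_{\mathcal U_0})$ with $\mathcal U_0:=\mathcal U\cap\mathfrak M_0$ is a local chart of $\mathfrak M_0$; (D5) for $\eta\in\mathfrak M_0$ and $(\mathcal U,\varphi),(\mathcal V,\psi)\in\mathscr A$ with $\eta\in\mathcal U\cap\mathcal V$, $\psi\circ\varphi^{-1}\in\mathfrak C^k(\varphi(\mathcal U_0\cap\mathcal V_0);X,X)$ and $\varphi\circ\psi^{-1}\in\mathfrak C^k(\psi(\mathcal U_0\cap\mathcal V_0);X,X)$. $(\mathfrak M,\mathfrak M_0,\mathscr A)$ is inward spreadable if there is a Banach manifold $\mathfrak M_1\subseteq\mathfrak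 M_0$, modelled on a Banach space $X_1$, which is a $C^1$-embedded Banach submanifold of $\mathfrak M_0$ with respect to the restrictions to $\mathfrak M_0$ of the charts of $\mathscr A$ ($\mathfrak M_1$ an inner $C^1$-kernel); outward spreadable if there is a Banach manifold $\widetilde{\mathfrak M}\supseteq\mathfrak M$ with a chart family $\widetilde{\mathscr A}$ whose restrictions to $\mathfrak M$ form $\mathscr A$ such that $\mathfrak M$ is a $C^1$-embedded Banach submanifold of $\widetilde{\mathfrak M}$. If both hold, $(\mathfrak M,\mathscr A)$ is a quasi-differentiable Banach manifold with $C^1$-kernel $\mathfrak M_0$. Tangent vectors. For $\eta\in\mathfrak M_0$, $\mathcal T_\eta(\mathfrak M)$ is the set of tangent vectors $f'(0)$ (acting on suitable real functions $F$ by $F\mapsto(F\circ f)'(0)$) of curves $f$ through $\eta$ continuously differentiable at $0$ in chart coordinates, and for a chart $\varphi\in\mathscr A$ at $\eta$, $\varphi'(\eta):\mathcal T_\eta(\mathfrak M)\to X$ is the induced linear bijection $f'(0)\mapsto(\varphi\circ\psi^{-1})'(\psi(\eta))(\psi\circ f)'(0)$. For a chart $(\mathcal U,\varphi)\in\mathscr A$ at $\eta$, $\mathcal T^0_{\eta,\varphi}(\mathfrak M)$ is the set of $f'(0)$ for curves $f:(-\varepsilon,\varepsilon)\to\mathfrak M_0$ with $f(0)=\eta$ such that $t\mapsto\varphi(f(t))$ is continuously differentiable on $(-\varepsilon,\varepsilon)$ in the norm of $X_0$; $\mathcal T^0_\eta(\mathfrak M)=\bigcup_{(\mathcal U,\varphi)}\mathcal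 T^0_{\eta,\varphi}(\mathfrak M)$ (union over charts of $\mathscr A$ at $\eta$). *)

theory Defs
  imports "HOL-Analysis.Analysis"
begin

text \<open>Charts are pairs (U, phi) of a domain U and a (total) HOL function phi; only the
  values of phi on U are meaningful.  A smaller Banach space X0 that is densely embedded
  in X is represented by its own type together with the embedding map iota.\<close>

definition dense_embedding :: "('x0::real_normed_vector \<Rightarrow> 'x::real_normed_vector) \<Rightarrow> bool" where
  "dense_embedding \<iota> \<longleftrightarrow> bounded_linear \<iota> \<and> inj \<iota> \<and> closure (range \<iota>) = UNIV"

definition local_chart :: "'m topology \<Rightarrow> 'm set \<Rightarrow> ('m \<Rightarrow> 'x::real_normed_vector) \<Rightarrow> bool" where
  "local_chart M U \<phi> \<longleftrightarrow> openin M U \<and> open (\<phi> ` U) \<and>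
     homeomorphic_map (subtopology M U) (top_of_set (\<phi> ` U)) \<phi>"

definition top_banach_manifold :: "'m topology \<Rightarrow> 'x::banach itself \<Rightarrow> bool" where
  "top_banach_manifold M (t::'x itself) \<longleftrightarrow>
     (\<forall>p\<in>topspace M. \<exists>U (\<phi>::'m \<Rightarrow> 'x). p \<in> U \<and> local_chart M U \<phi>)"

definition frakC1 :: "('x0::real_normed_vector \<Rightarrow> 'x::real_normed_vector) \<Rightarrow> 'x0 set
    \<Rightarrow> ('x0 \<Rightarrow> 'y::real_normed_vector) \<Rightarrow> bool" where
  "frakC1 \<iota> U0 F \<longleftrightarrow> (\<exists>F' :: 'x0 \<Rightarrow> ('x \<Rightarrow>\<^sub>L 'y).
     (\<forall>x0\<in>U0. ((\<lambda>x. (F x - F x0 - blinfun_apply (F' x0) (\<iota> (x - x0))) /\<^sub>R norm (x - x0))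
                  \<longlongrightarrow> 0) (at x0 within U0)) \<and>
     continuous_on U0 F')"

definition C1_embedded_submanifold :: "'m topology \<Rightarrow> 'm topology \<Rightarrow> ('x0::banach \<Rightarrow> 'x::banach)
    \<Rightarrow> ('m set \<times> ('m \<Rightarrow> 'x)) set \<Rightarrow> bool" where
  "C1_embedded_submanifold M M0 \<iota> \<A> \<longleftrightarrow>
     top_banach_manifold M TYPE('x) \<and> top_banach_manifold M0 TYPE('x0) \<and>
     dense_embedding \<iota> \<and>
     topspace M0 \<subseteq> topspace M \<and> (\<forall>U. openin M U \<longrightarrow> openin M0 (U \<inter> topspace M0)) \<and>
     (\<forall>(U,\<phi>)\<in>\<A>. local_chart M U \<phi>) \<and> \<Union> (fst ` \<A>) = topspace M \<and>
     (\<forall>\<eta>\<in>topspace M0. \<forall>(U,\<phi>)\<in>\<A>. \<eta> \<in> U \<longrightarrow>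
        \<phi> ` (U \<inter> topspace M0) \<subseteq> range \<iota> \<and>
        local_chart M0 (U \<inter> topspace M0) (\<lambda>p. inv \<iota> (\<phi> p))) \<and>
     (\<forall>\<eta>\<in>topspace M0. \<forall>(U,\<phi>)\<in>\<A>. \<forall>(V,\<psi>)\<in>\<A>. \<eta> \<in> U \<inter> V \<longrightarrow>
        frakC1 \<iota> ((\<lambda>p. inv \<iota> (\<phi> p)) ` (U \<inter> V \<inter> topspace M0)) (\<lambda>z. \<psi> (inv_into U \<phi> (\<iota> z))) \<and>
        frakC1 \<iota> ((\<lambda>p. inv \<iota> (\<psi> p)) ` (U \<inter> V \<inter> topspace M0)) (\<lambda>z. \<phi> (inv_into V \<psi> (\<iota> z))))"

definition restrict_charts :: "'m topology \<Rightarrow> ('x0 \<Rightarrow> 'x) \<Rightarrow> ('m set \<times> ('m \<Rightarrow> 'x)) set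
    \<Rightarrow> ('m set \<times> ('m \<Rightarrow> 'x0)) set" where
  "restrict_charts S \<iota> \<A> = (\<lambda>(U,\<phi>). (U \<inter> topspace S, \<lambda>p. inv \<iota> (\<phi> p))) ` \<A>"

definition same_chart :: "('m set \<times> ('m \<Rightarrow> 'x)) \<Rightarrow> ('m set \<times> ('m \<Rightarrow> 'x)) \<Rightarrow> bool" where
  "same_chart c d \<longleftrightarrow> fst c = fst d \<and> (\<forall>p\<in>fst c. snd c p = snd d p)"

definition inner_C1_kernel :: "'m topology \<Rightarrow> ('x0::banach \<Rightarrow> 'x::banach)
    \<Rightarrow> ('m set \<times> ('m \<Rightarrow> 'x)) set \<Rightarrow> 'm topology \<Rightarrow> ('x1::banach \<Rightarrow> 'x0) \<Rightarrow> bool" where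
  "inner_C1_kernel M0 \<iota> \<A> M1 \<iota>1 \<longleftrightarrow>
     topspace M1 \<subseteq> topspace M0 \<and> C1_embedded_submanifold M0 M1 \<iota>1 (restrict_charts M0 \<iota> \<A>)"

text \<open>Outward spreadability witnessed by Mt (modelled on 'xt, X embedded via kappa) with
  chart family At whose restrictions to M form A.\<close>
definition outward_extension :: "'m topology \<Rightarrow> ('m set \<times> ('m \<Rightarrow> 'x::banach)) set
    \<Rightarrow> 'm topology \<Rightarrow> ('x \<Rightarrow> 'xt::banach) \<Rightarrow> ('m set \<times> ('m \<Rightarrow> 'xt)) set \<Rightarrow> bool" where
  "outward_extension M \<A> Mt \<kappa> \<A>t \<longleftrightarrow>
     topspace M \<subseteq> topspace Mt \<and> C1_embedded_submanifold Mt M \<kappa> \<A>t \<and>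
     (\<forall>c\<in>\<A>. \<exists>d\<in>restrict_charts M \<kappa> \<A>t. same_chart c d) \<and>
     (\<forall>d\<in>restrict_charts M \<kappa> \<A>t. fst d \<noteq> {} \<longrightarrow> (\<exists>c\<in>\<A>. same_chart c d))"

definition curve0 :: "'m topology \<Rightarrow> ('x0::real_normed_vector \<Rightarrow> 'x) \<Rightarrow> 'm
    \<Rightarrow> ('m set \<times> ('m \<Rightarrow> 'x)) \<Rightarrow> (real \<Rightarrow> 'm) \<Rightarrow> bool" where
  "curve0 M0 \<iota> \<eta> c f \<longleftrightarrow> f 0 = \<eta> \<and>
     (\<exists>\<epsilon>>0. f ` {-\<epsilon><..<\<epsilon>} \<subseteq> fst c \<inter> topspace M0 \<and>
        (\<lambda>t. inv \<iota> (snd c (f t))) C1_differentiable_on {-\<epsilon><..<\<epsilon>})"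

text \<open>Suitable real functions at eta: those of the form G o phi near eta for a chart phi at eta
  and G differentiable at phi(eta).  A tangent vector f'(0) acts on them by F |-> (F o f)'(0).\<close>
definition suitable_fun :: "('m set \<times> ('m \<Rightarrow> 'x::real_normed_vector)) set \<Rightarrow> 'm \<Rightarrow> ('m \<Rightarrow> real) \<Rightarrow> bool" where
  "suitable_fun \<A> \<eta> F \<longleftrightarrow> (\<exists>U \<phi>. (U,\<phi>) \<in> \<A> \<and> \<eta> \<in> U \<and>
     (\<exists>G::'x \<Rightarrow> real. G differentiable (at (\<phi> \<eta>)) \<and> (\<forall>p\<in>U. F p = G (\<phi> p))))"

definition tangent_vec :: "('m set \<times> ('m \<Rightarrow> 'x::real_normed_vector)) set \<Rightarrow> 'm \<Rightarrow> (real \<Rightarrow> 'm)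
    \<Rightarrow> (('m \<Rightarrow> real) \<Rightarrow> real)" where
  "tangent_vec \<A> \<eta> f = (\<lambda>F. if suitable_fun \<A> \<eta> F then deriv (\<lambda>t. F (f t)) 0 else 0)"

definition T0_chart :: "'m topology \<Rightarrow> ('x0::real_normed_vector \<Rightarrow> 'x::real_normed_vector)
    \<Rightarrow> ('m set \<times> ('m \<Rightarrow> 'x)) set \<Rightarrow> 'm \<Rightarrow> ('m set \<times> ('m \<Rightarrow> 'x)) \<Rightarrow> (('m \<Rightarrow> real) \<Rightarrow> real) set" where
  "T0_chart M0 \<iota> \<A> \<eta> c = {tangent_vec \<A> \<eta> f | f. curve0 M0 \<iota> \<eta> c f}"

definition T0 :: "'m topology \<Rightarrow> ('x0::real_normed_vector \<Rightarrow> 'x::real_normed_vector)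
    \<Rightarrow> ('m set \<times> ('m \<Rightarrow> 'x)) set \<Rightarrow> 'm \<Rightarrow> (('m \<Rightarrow> real) \<Rightarrow> real) set" where
  "T0 M0 \<iota> \<A> \<eta> = \<Union> {T0_chart M0 \<iota> \<A> \<eta> c | c. c \<in> \<A> \<and> \<eta> \<in> fst c}"

definition chart_tangent_map :: "('m \<Rightarrow> 'x::real_normed_vector) \<Rightarrow> (real \<Rightarrow> 'm) \<Rightarrow> 'x" where
  "chart_tangent_map \<phi> f = vector_derivative (\<lambda>t. \<phi> (f t)) (at 0)"

definition T0_image :: "'m topology \<Rightarrow> ('x0::real_normed_vector \<Rightarrow> 'x::real_normed_vector)
    \<Rightarrow> ('m set \<times> ('m \<Rightarrow> 'x)) set \<Rightarrow> 'm \<Rightarrow> ('m \<Rightarrow> 'x) \<Rightarrow> 'x set" where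
  "T0_image M0 \<iota> \<A> \<eta> \<phi> =
     {chart_tangent_map \<phi> f | f. \<exists>c\<in>\<A>. \<eta> \<in> fst c \<and> curve0 M0 \<iota> \<eta> c f}"

end

theory Submission
  imports Defs
begin


lemma emb_A:
  assumes K: "C1_embedded_submanifold M M0 \<iota> \<A>"
  shows "dense_embedding \<iota>" "topspace M0 \<subseteq> topspace M"
    "\<And>U. openin M U \<Longrightarrow> openin M0 (U \<inter> topspace M0)"
    "\<And>c. c \<in> \<A> \<Longrightarrow> local_chart M (fst c) (snd c)"
  using K unfolding C1_embedded_submanifold_def by (auto simp: case_prod_beta)

lemma emb_D4:
  assumes K: "C1_embedded_submanifold M M0 \<iota> \<A>"
    and U: "(U,\<phi>) \<in> \<A>" "\<eta> \<in> U" and eta: "\<eta> \<in> topspace M0"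
  shows "\<phi> ` (U \<inter> topspace M0) \<subseteq> range \<iota> \<and>
        local_chart M0 (U \<inter> topspace M0) (\<lambda>p. inv \<iota> (\<phi> p))"
proof -
  have D4: "\<forall>\<eta>\<in>topspace M0. \<forall>(U,\<phi>)\<in>\<A>. \<eta> \<in> U \<longrightarrow>
        \<phi> ` (U \<inter> topspace M0) \<subseteq> range \<iota> \<and>
        local_chart M0 (U \<inter> topspace M0) (\<lambda>p. inv \<iota> (\<phi> p))"
    using K unfolding C1_embedded_submanifold_def by (elim conjE)
  have "(\<lambda>(U,\<phi>). \<eta> \<in> U \<longrightarrow>
        \<phi> ` (U \<inter> topspace M0) \<subseteq> range \<iota> \<and>
        local_chart M0 (U \<inter> topspace M0) (\<lambda>p. inv \<iota> (\<phi> p))) (U,\<phi>)"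
    using bspec[OF bspec[OF D4 eta] U(1)] .
  then show ?thesis using U(2) by simp
qed

lemma emb_D5:
  assumes K: "C1_embedded_submanifold M M0 \<iota> \<A>" and eta: "\<eta> \<in> topspace M0"
    and U: "(U,\<phi>) \<in> \<A>" "\<eta> \<in> U" and V: "(V,\<psi>) \<in> \<A>" "\<eta> \<in> V"
  shows "frakC1 \<iota> ((\<lambda>p. inv \<iota> (\<phi> p)) ` (U \<inter> V \<inter> topspace M0)) (\<lambda>z. \<psi> (inv_into U \<phi> (\<iota> z)))"
proof -
  have H: "\<forall>\<eta>\<in>topspace M0. \<forall>(U,\<phi>)\<in>\<A>. \<forall>(V,\<psi>)\<in>\<A>. \<eta> \<in> U \<inter> V \<longrightarrow>
        frakC1 \<iota> ((\<lambda>p. inv \<iota> (\<phi> p)) ` (U \<inter> V \<inter> topspace M0)) (\<lambda>z. \<psi> (inv_into U \<phi> (\<iota> z))) \<and>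
        frakC1 \<iota> ((\<lambda>p. inv \<iota> (\<psi> p)) ` (U \<inter> V \<inter> topspace M0)) (\<lambda>z. \<phi> (inv_into V \<psi> (\<iota> z)))"
    using K unfolding C1_embedded_submanifold_def by (elim conjE)
  have "(\<lambda>(U,\<phi>). \<forall>(V,\<psi>)\<in>\<A>. \<eta> \<in> U \<inter> V \<longrightarrow>
        frakC1 \<iota> ((\<lambda>p. inv \<iota> (\<phi> p)) ` (U \<inter> V \<inter> topspace M0)) (\<lambda>z. \<psi> (inv_into U \<phi> (\<iota> z))) \<and>
        frakC1 \<iota> ((\<lambda>p. inv \<iota> (\<psi> p)) ` (U \<inter> V \<inter> topspace M0)) (\<lambda>z. \<phi> (inv_into V \<psi> (\<iota> z)))) (U,\<phi>)"
    using bspec[OF bspec[OF H eta] U(1)] .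
  then have "\<forall>(V,\<psi>)\<in>\<A>. \<eta> \<in> U \<inter> V \<longrightarrow>
        frakC1 \<iota> ((\<lambda>p. inv \<iota> (\<phi> p)) ` (U \<inter> V \<inter> topspace M0)) (\<lambda>z. \<psi> (inv_into U \<phi> (\<iota> z)))"
    by (simp add: case_prod_beta)
  from bspec[OF this V(1)] show ?thesis using U V by simp
qed

lemma chart_facts:
  assumes K: "C1_embedded_submanifold M M0 \<iota> \<A>"
    and U: "(U,\<phi>) \<in> \<A>" "\<eta> \<in> U" and eta: "\<eta> \<in> topspace M0"
  shows "openin M U" "inj_on \<phi> U" "\<phi> ` (U \<inter> topspace M0) \<subseteq> range \<iota>"
    "local_chart M0 (U \<inter> topspace M0) (\<lambda>p. inv \<iota> (\<phi> p))"
    "inj_on (\<lambda>p. inv \<iota> (\<phi> p)) (U \<inter> topspace M0)"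
    "bounded_linear \<iota>" "inj \<iota>" "closure (range \<iota>) = UNIV"
    "openin M0 (U \<inter> topspace M0)"
proof -
  have lc: "local_chart M U \<phi>" using emb_A(4)[OF K U(1)] by simp
  then show oU: "openin M U" unfolding local_chart_def by blast
  have "homeomorphic_map (subtopology M U) (top_of_set (\<phi> ` U)) \<phi>"
    using lc unfolding local_chart_def by blast
  then have "inj_on \<phi> (topspace (subtopology M U))" by (rule homeomorphic_imp_injective_map)
  moreover have "topspace (subtopology M U) = U" using oU openin_subset by fastforce
  ultimately show "inj_on \<phi> U" by simp
  have c: "\<phi> ` (U \<inter> topspace M0) \<subseteq> range \<iota> \<and>
        local_chart M0 (U \<inter> topspace M0) (\<lambda>p. inv \<iota> (\<phi> p))"
    using emb_D4[OF K U eta] .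
  then show "\<phi> ` (U \<inter> topspace M0) \<subseteq> range \<iota>"
    "local_chart M0 (U \<inter> topspace M0) (\<lambda>p. inv \<iota> (\<phi> p))" by auto
  have lc0: "local_chart M0 (U \<inter> topspace M0) (\<lambda>p. inv \<iota> (\<phi> p))" using c by blast
  then show oU0: "openin M0 (U \<inter> topspace M0)" unfolding local_chart_def by blast
  have "homeomorphic_map (subtopology M0 (U \<inter> topspace M0)) (top_of_set ((\<lambda>p. inv \<iota> (\<phi> p)) ` (U \<inter> topspace M0))) (\<lambda>p. inv \<iota> (\<phi> p))"
    using lc0 unfolding local_chart_def by blast
  then have "inj_on (\<lambda>p. inv \<iota> (\<phi> p)) (topspace (subtopology M0 (U \<inter> topspace M0)))"
    by (rule homeomorphic_imp_injective_map)
  moreover have "topspace (subtopology M0 (U \<inter> topspace M0)) = U \<inter> topspace M0"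
    using oU0 openin_subset by fastforce
  ultimately show "inj_on (\<lambda>p. inv \<iota> (\<phi> p)) (U \<inter> topspace M0)" by simp
  show "bounded_linear \<iota>" "inj \<iota>" "closure (range \<iota>) = UNIV"
    using emb_A(1)[OF K] unfolding dense_embedding_def by auto
qed

lemma open_img:
  assumes K: "C1_embedded_submanifold M M0 \<iota> \<A>"
    and U: "(U,\<phi>) \<in> \<A>" "\<eta> \<in> U" and eta: "\<eta> \<in> topspace M0" and O: "openin M Ob"
  shows "open ((\<lambda>p. inv \<iota> (\<phi> p)) ` (U \<inter> Ob \<inter> topspace M0))"
proof -
  have lc0: "local_chart M0 (U \<inter> topspace M0) (\<lambda>p. inv \<iota> (\<phi> p))"
    using chart_facts[OF K U eta] by blast
  then have hm: "homeomorphic_map (subtopology M0 (U \<inter> topspace M0)) (top_of_set ((\<lambda>p. inv \<iota> (\<phi> p)) ` (U \<inter> topspace M0))) (\<lambda>p. inv \<iota> (\<phi> p))"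
    and op: "open ((\<lambda>p. inv \<iota> (\<phi> p)) ` (U \<inter> topspace M0))"
    unfolding local_chart_def by blast+
  have o2: "openin M0 (Ob \<inter> topspace M0)" using emb_A(3)[OF K O] .
  have "(Ob \<inter> topspace M0) \<inter> (U \<inter> topspace M0) = U \<inter> Ob \<inter> topspace M0" by blast
  then have "openin (subtopology M0 (U \<inter> topspace M0)) (U \<inter> Ob \<inter> topspace M0)"
    unfolding openin_subtopology using o2 by metis
  then have "openin (top_of_set ((\<lambda>p. inv \<iota> (\<phi> p)) ` (U \<inter> topspace M0))) ((\<lambda>p. inv \<iota> (\<phi> p)) ` (U \<inter> Ob \<inter> topspace M0))"
    using homeomorphic_imp_open_map[OF hm] unfolding open_map_def by blast
  then show ?thesis using op openin_open_trans by blast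
qed

lemma frak_deriv:
  assumes F: "frakC1 \<iota> D F" and "open D" "x \<in> D" and bl: "bounded_linear \<iota>"
  shows "\<exists>L. (F has_derivative (\<lambda>h. blinfun_apply L (\<iota> h))) (at x)"
proof -
  obtain F' where lim: "\<forall>x0\<in>D. ((\<lambda>y. (F y - F x0 - blinfun_apply (F' x0) (\<iota> (y - x0))) /\<^sub>R norm (y - x0))
                  \<longlongrightarrow> 0) (at x0 within D)"
    using F unfolding frakC1_def by blast
  have "bounded_linear (\<lambda>h. blinfun_apply (F' x) (\<iota> h))"
    by (rule bounded_linear_compose[OF blinfun.bounded_linear_right bl])
  then have "(F has_derivative (\<lambda>h. blinfun_apply (F' x) (\<iota> h))) (at x within D)"
    unfolding has_derivative_at_within using lim assms(3) by simp
  then show ?thesis using at_within_open[OF assms(3,2)] by metis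
qed



definition Dt :: "('x0::real_normed_vector \<Rightarrow> 'x::real_normed_vector) \<Rightarrow> 'm \<Rightarrow> 'm set \<Rightarrow> ('m \<Rightarrow> 'x) \<Rightarrow> ('m \<Rightarrow> 'y::real_normed_vector) \<Rightarrow> 'x0 \<Rightarrow> 'y" where
  "Dt \<iota> \<eta> U \<phi> ch = frechet_derivative (\<lambda>z. ch (inv_into U \<phi> (\<iota> z))) (at (inv \<iota> (\<phi> \<eta>)))"

lemma back_pt:
  assumes "inj_on \<phi> U" "\<phi> ` (U \<inter> S) \<subseteq> range \<iota>" "p \<in> U" "p \<in> S"
  shows "\<iota> (inv \<iota> (\<phi> p)) = \<phi> p" "inv_into U \<phi> (\<iota> (inv \<iota> (\<phi> p))) = p"
proof -
  have "\<phi> p \<in> range \<iota>" using assms by blast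
  then show 1: "\<iota> (inv \<iota> (\<phi> p)) = \<phi> p" by (simp add: f_inv_into_f)
  show "inv_into U \<phi> (\<iota> (inv \<iota> (\<phi> p))) = p" unfolding 1 using assms by (simp add: inv_into_f_f)
qed

lemma trans_diff:
  assumes K: "C1_embedded_submanifold M M0 \<iota> \<A>" and eta: "\<eta> \<in> topspace M0"
    and U: "(U,\<phi>) \<in> \<A>" "\<eta> \<in> U" and W: "(W,ch) \<in> \<A>" "\<eta> \<in> W"
  shows "((\<lambda>z. ch (inv_into U \<phi> (\<iota> z))) has_derivative (Dt \<iota> \<eta> U \<phi> ch)) (at (inv \<iota> (\<phi> \<eta>)))"
proof -
  have oW: "openin M W" using chart_facts[OF K W eta] by blast
  have op: "open ((\<lambda>p. inv \<iota> (\<phi> p)) ` (U \<inter> W \<inter> topspace M0))"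
    using open_img[OF K U eta oW] .
  have "inv \<iota> (\<phi> \<eta>) \<in> (\<lambda>p. inv \<iota> (\<phi> p)) ` (U \<inter> W \<inter> topspace M0)" using U W eta by blast
  then obtain L where "((\<lambda>z. ch (inv_into U \<phi> (\<iota> z))) has_derivative (\<lambda>h. blinfun_apply L (\<iota> h))) (at (inv \<iota> (\<phi> \<eta>)))"
    using frak_deriv[OF emb_D5[OF K eta U W] op] chart_facts[OF K U eta] by blast
  then have "(\<lambda>z. ch (inv_into U \<phi> (\<iota> z))) differentiable (at (inv \<iota> (\<phi> \<eta>)))"
    unfolding differentiable_def by blast
  then show ?thesis unfolding Dt_def frechet_derivative_works .
qed

lemma self_deriv:
  assumes K: "C1_embedded_submanifold M M0 \<iota> \<A>" and eta: "\<eta> \<in> topspace M0"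
    and U: "(U,\<phi>) \<in> \<A>" "\<eta> \<in> U"
  shows "Dt \<iota> \<eta> U \<phi> \<phi> = \<iota>"
proof -
  note cf = chart_facts[OF K U eta]
  have oU: "openin M U" using cf by blast
  let ?O = "(\<lambda>p. inv \<iota> (\<phi> p)) ` (U \<inter> U \<inter> topspace M0)"
  have op: "open ?O" using open_img[OF K U eta oU] .
  have inO: "inv \<iota> (\<phi> \<eta>) \<in> ?O" using U eta by blast
  have eq: "\<iota> z = \<phi> (inv_into U \<phi> (\<iota> z))" if zO: "z \<in> ?O" for z
  proof -
    obtain p where p: "p \<in> U" "p \<in> topspace M0" "z = inv \<iota> (\<phi> p)" using zO by blast
    show ?thesis using back_pt[OF cf(2) cf(3) p(1,2)] p(3) by simp
  qed
  have "(\<iota> has_derivative \<iota>) (at (inv \<iota> (\<phi> \<eta>)))"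
    using cf(6) by (rule bounded_linear_imp_has_derivative)
  then have "((\<lambda>z. \<phi> (inv_into U \<phi> (\<iota> z))) has_derivative \<iota>) (at (inv \<iota> (\<phi> \<eta>)))"
    by (rule has_derivative_transform_within_open[where f=\<iota> and g="\<lambda>z. \<phi> (inv_into U \<phi> (\<iota> z))", OF _ op inO eq])
  moreover have "((\<lambda>z. \<phi> (inv_into U \<phi> (\<iota> z))) has_derivative (Dt \<iota> \<eta> U \<phi> \<phi>)) (at (inv \<iota> (\<phi> \<eta>)))"
    using trans_diff[OF K eta U U] .
  ultimately show ?thesis using has_derivative_unique by metis
qed



lemma restr_mem:
  assumes "(U,\<phi>) \<in> \<A>"
  shows "(U \<inter> topspace M0, \<lambda>p. inv \<iota> (\<phi> p)) \<in> restrict_charts M0 \<iota> \<A>"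
  unfolding restrict_charts_def using assms by (force intro: rev_image_eqI)

lemma CH:
  assumes K: "C1_embedded_submanifold M M0 \<iota> \<A>"
    and inward: "inner_C1_kernel M0 \<iota> \<A> M1 \<iota>1"
    and eta: "\<eta> \<in> topspace M1"
    and U: "(U, \<phi>) \<in> \<A>" "\<eta> \<in> U"
    and V: "(V, \<psi>) \<in> \<A>" "\<eta> \<in> V"
  shows "\<exists>Kl. bounded_linear Kl \<and> (\<forall>W ch. (W,ch) \<in> \<A> \<longrightarrow> \<eta> \<in> W \<longrightarrow>
            (\<forall>v. Dt \<iota> \<eta> U \<phi> ch v = Dt \<iota> \<eta> V \<psi> ch (Kl v)))"
proof -
  have M10: "topspace M1 \<subseteq> topspace M0" and KI: "C1_embedded_submanifold M0 M1 \<iota>1 (restrict_charts M0 \<iota> \<A>)"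
    using inward unfolding inner_C1_kernel_def by auto
  have eta0: "\<eta> \<in> topspace M0" using eta M10 by blast
  let ?U0 = "U \<inter> topspace M0" and ?V0 = "V \<inter> topspace M0"
  let ?zp = "\<lambda>p. inv \<iota> (\<phi> p)" and ?zs = "\<lambda>p. inv \<iota> (\<psi> p)"
  have cU: "(?U0, ?zp) \<in> restrict_charts M0 \<iota> \<A>" using restr_mem[OF U(1)] .
  have cV: "(?V0, ?zs) \<in> restrict_charts M0 \<iota> \<A>" using restr_mem[OF V(1)] .
  have eU0: "\<eta> \<in> ?U0" and eV0: "\<eta> \<in> ?V0" using U V eta0 by auto
  note cfU = chart_facts[OF K U eta0]
  note cfV = chart_facts[OF K V eta0]
  note cfU1 = chart_facts[OF KI cU eU0 eta]
  have oV0: "openin M0 ?V0" using cfV by blast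
  let ?S = "\<lambda>z. ?zs (inv_into ?U0 ?zp (\<iota>1 z))"
  let ?u1 = "inv \<iota>1 (?zp \<eta>)"
  have fr: "frakC1 \<iota>1 ((\<lambda>p. inv \<iota>1 (?zp p)) ` (?U0 \<inter> ?V0 \<inter> topspace M1)) ?S"
    using emb_D5[OF KI eta cU eU0 cV eV0] by simp
  have opD: "open ((\<lambda>p. inv \<iota>1 (?zp p)) ` (?U0 \<inter> ?V0 \<inter> topspace M1))"
    using open_img[OF KI cU eU0 eta oV0] by simp
  have u1D: "?u1 \<in> (\<lambda>p. inv \<iota>1 (?zp p)) ` (?U0 \<inter> ?V0 \<inter> topspace M1)"
    using eU0 eV0 eta by blast
  obtain L where SL: "(?S has_derivative (\<lambda>h. blinfun_apply L (\<iota>1 h))) (at ?u1)"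
    using frak_deriv[OF fr opD u1D] cfU1(6) by blast
  have blK: "bounded_linear (blinfun_apply L)" by (rule blinfun.bounded_linear_right)
  have iu1: "\<iota>1 ?u1 = ?zp \<eta>"
    using back_pt(1)[OF cfU1(2) cfU1(3) eU0 eta] .
  have Su1: "?S ?u1 = ?zs \<eta>"
    using iu1 inv_into_f_f[OF cfU(5) eU0] by simp
  show ?thesis
  proof (intro exI conjI allI impI)
    show "bounded_linear (blinfun_apply L)" by (rule blK)
    fix W ch v assume W: "(W,ch) \<in> \<A>" "\<eta> \<in> W"
    let ?T1 = "\<lambda>z. ch (inv_into U \<phi> (\<iota> z))" and ?T2 = "\<lambda>z. ch (inv_into V \<psi> (\<iota> z))"
    have T1: "(?T1 has_derivative Dt \<iota> \<eta> U \<phi> ch) (at (?zp \<eta>))" using trans_diff[OF K eta0 U W] .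
    have T2: "(?T2 has_derivative Dt \<iota> \<eta> V \<psi> ch) (at (?zs \<eta>))" using trans_diff[OF K eta0 V W] .
    have d1: "((?T1 \<circ> \<iota>1) has_derivative (Dt \<iota> \<eta> U \<phi> ch \<circ> \<iota>1)) (at ?u1)"
      apply (rule diff_chain_at)
       apply (rule bounded_linear_imp_has_derivative[OF cfU1(6)])
      using T1 iu1 by simp
    have d2: "((?T2 \<circ> ?S) has_derivative (Dt \<iota> \<eta> V \<psi> ch \<circ> (\<lambda>h. blinfun_apply L (\<iota>1 h)))) (at ?u1)"
      apply (rule diff_chain_at[OF SL])
      using T2 Su1 by simp
    have oW: "openin M W" using chart_facts[OF K W eta0] by blast
    have oVW: "openin M0 ((V \<inter> W) \<inter> topspace M0)"
      using emb_A(3)[OF K] openin_Int[OF chart_facts(1)[OF K V eta0] oW] by blast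
    let ?N = "(\<lambda>p. inv \<iota>1 (?zp p)) ` (?U0 \<inter> ((V \<inter> W) \<inter> topspace M0) \<inter> topspace M1)"
    have opN: "open ?N" using open_img[OF KI cU eU0 eta oVW] by simp
    have u1N: "?u1 \<in> ?N" using eU0 eV0 W eta by blast
    have eqN: "(?T2 \<circ> ?S) u = (?T1 \<circ> \<iota>1) u" if uN: "u \<in> ?N" for u
    proof -
      obtain p where p: "p \<in> U" "p \<in> V" "p \<in> W" "p \<in> topspace M0" "p \<in> topspace M1"
        "u = inv \<iota>1 (?zp p)" using uN by blast
      have pU0: "p \<in> ?U0" using p by blast
      have a: "\<iota>1 u = ?zp p" using back_pt(1)[OF cfU1(2) cfU1(3) pU0 p(5)] p(6) by simp
      have b: "inv_into U \<phi> (\<iota> (?zp p)) = p" using back_pt(2)[OF cfU(2) cfU(3) p(1) p(4)] .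
      have c: "inv_into ?U0 ?zp (?zp p) = p" using inv_into_f_f[OF cfU(5) pU0] by simp
      have d: "inv_into V \<psi> (\<iota> (?zs p)) = p" using back_pt(2)[OF cfV(2) cfV(3) p(2) p(4)] .
      show ?thesis using a b c d by simp
    qed
    have d3: "((?T1 \<circ> \<iota>1) has_derivative (Dt \<iota> \<eta> V \<psi> ch \<circ> (\<lambda>h. blinfun_apply L (\<iota>1 h)))) (at ?u1)"
      by (rule has_derivative_transform_within_open[where f="?T2 \<circ> ?S", OF d2 opN u1N eqN])
    have e: "Dt \<iota> \<eta> U \<phi> ch \<circ> \<iota>1 = Dt \<iota> \<eta> V \<psi> ch \<circ> (\<lambda>h. blinfun_apply L (\<iota>1 h))"
      using has_derivative_unique[OF d1 d3] .
    have bl1: "bounded_linear (Dt \<iota> \<eta> U \<phi> ch)" using T1 has_derivative_bounded_linear by blast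
    have bl2: "bounded_linear (Dt \<iota> \<eta> V \<psi> ch)" using T2 has_derivative_bounded_linear by blast
    have cl: "closed {v. Dt \<iota> \<eta> U \<phi> ch v = Dt \<iota> \<eta> V \<psi> ch (blinfun_apply L v)}"
      apply (rule closed_Collect_eq)
       apply (rule linear_continuous_on[OF bl1])
      apply (rule linear_continuous_on[OF bounded_linear_compose[OF bl2 blK]])
      done
    have "range \<iota>1 \<subseteq> {v. Dt \<iota> \<eta> U \<phi> ch v = Dt \<iota> \<eta> V \<psi> ch (blinfun_apply L v)}"
      using e by (auto simp: fun_eq_iff)
    then have "closure (range \<iota>1) \<subseteq> {v. Dt \<iota> \<eta> U \<phi> ch v = Dt \<iota> \<eta> V \<psi> ch (blinfun_apply L v)}"
      using cl closure_minimal by blast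
    then show "Dt \<iota> \<eta> U \<phi> ch v = Dt \<iota> \<eta> V \<psi> ch (blinfun_apply L v)" using cfU1(8) by blast
  qed
qed



lemma TV:
  assumes K: "C1_embedded_submanifold M M0 \<iota> \<A>" and eta0: "\<eta> \<in> topspace M0"
    and U: "(U,\<phi>) \<in> \<A>" "\<eta> \<in> U" and f0: "f 0 = \<eta>" and ep: "\<epsilon> > 0"
    and fimg: "f ` {-\<epsilon><..<\<epsilon>} \<subseteq> U \<inter> topspace M0"
    and zd: "((\<lambda>t. inv \<iota> (\<phi> (f t))) has_vector_derivative a) (at 0)"
    and W: "(W,ch) \<in> \<A>" "\<eta> \<in> W"
  shows "\<exists>\<delta>>0. (\<forall>t. \<bar>t\<bar> < \<delta> \<longrightarrow> f t \<in> W) \<and>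
     ((\<lambda>t. ch (f t)) has_vector_derivative Dt \<iota> \<eta> U \<phi> ch a) (at 0)"
proof -
  note cfU = chart_facts[OF K U eta0]
  have oW: "openin M W" using chart_facts[OF K W eta0] by blast
  let ?z = "\<lambda>t. inv \<iota> (\<phi> (f t))"
  let ?O = "(\<lambda>p. inv \<iota> (\<phi> p)) ` (U \<inter> W \<inter> topspace M0)"
  have op: "open ?O" using open_img[OF K U eta0 oW] .
  have z0: "?z 0 \<in> ?O" using f0 U W eta0 by blast
  then obtain e where e: "e > 0" "ball (?z 0) e \<subseteq> ?O" using op open_contains_ball by blast
  have "continuous (at 0) ?z" using has_vector_derivative_continuous[OF zd] .
  then obtain d where d: "d > 0" "\<And>t. dist t 0 < d \<Longrightarrow> dist (?z t) (?z 0) < e"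
    unfolding continuous_at_eps_delta using e(1) by blast
  define \<delta> where "\<delta> = min d \<epsilon>"
  have dpos: "\<delta> > 0" using d ep by (simp add: \<delta>_def)
  have pt: "f t \<in> W \<and> ch (f t) = ch (inv_into U \<phi> (\<iota> (?z t)))" if t: "\<bar>t\<bar> < \<delta>" for t
  proof -
    have "t \<in> {-\<epsilon><..<\<epsilon>}" using t by (auto simp: \<delta>_def abs_less_iff)
    then have ft: "f t \<in> U \<inter> topspace M0" using fimg by blast
    have "?z t \<in> ball (?z 0) e" using d(2)[of t] t by (simp add: \<delta>_def dist_commute)
    then have "?z t \<in> ?O" using e by blast
    then obtain p where p: "p \<in> U" "p \<in> W" "p \<in> topspace M0" "?z t = inv \<iota> (\<phi> p)" by blast
    have "f t = p" using inj_onD[OF cfU(5) p(4)] ft p by blast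
    then show ?thesis using back_pt(2)[OF cfU(2) cfU(3) p(1) p(3)] p by simp
  qed
  have T1: "((\<lambda>z. ch (inv_into U \<phi> (\<iota> z))) has_derivative Dt \<iota> \<eta> U \<phi> ch) (at (?z 0))"
    using trans_diff[OF K eta0 U W] f0 by simp
  have bl: "bounded_linear (Dt \<iota> \<eta> U \<phi> ch)" using T1 has_derivative_bounded_linear by blast
  have "(((\<lambda>z. ch (inv_into U \<phi> (\<iota> z))) \<circ> ?z) has_derivative (Dt \<iota> \<eta> U \<phi> ch \<circ> (\<lambda>x. x *\<^sub>R a))) (at 0)"
    using diff_chain_at[OF zd[unfolded has_vector_derivative_def] T1] .
  moreover have "(Dt \<iota> \<eta> U \<phi> ch \<circ> (\<lambda>x. x *\<^sub>R a)) = (\<lambda>x. x *\<^sub>R Dt \<iota> \<eta> U \<phi> ch a)"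
    using linear_cmul[OF bounded_linear.linear[OF bl]] by (simp add: fun_eq_iff)
  ultimately have "(((\<lambda>z. ch (inv_into U \<phi> (\<iota> z))) \<circ> ?z) has_vector_derivative Dt \<iota> \<eta> U \<phi> ch a) (at 0)"
    unfolding has_vector_derivative_def by simp
  then have "((\<lambda>t. ch (f t)) has_vector_derivative Dt \<iota> \<eta> U \<phi> ch a) (at 0)"
    apply (rule has_vector_derivative_transform_within_open[where S="ball 0 \<delta>"])
    using dpos pt by auto
  then show ?thesis using pt dpos by blast
qed

lemma mkcurve:
  assumes K: "C1_embedded_submanifold M M0 \<iota> \<A>" and eta0: "\<eta> \<in> topspace M0"
    and V: "(V,\<psi>) \<in> \<A>" "\<eta> \<in> V"
  shows "\<exists>g. curve0 M0 \<iota> \<eta> (V,\<psi>) g \<and> ((\<lambda>t. inv \<iota> (\<psi> (g t))) has_vector_derivative b) (at 0)"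
proof -
  note cfV = chart_facts[OF K V eta0]
  have oV: "openin M V" using cfV by blast
  let ?zs = "\<lambda>p. inv \<iota> (\<psi> p)"
  let ?O = "?zs ` (V \<inter> V \<inter> topspace M0)"
  have op: "open ?O" using open_img[OF K V eta0 oV] .
  have z0: "?zs \<eta> \<in> ?O" using V eta0 by blast
  then obtain r where r: "r > 0" "ball (?zs \<eta>) r \<subseteq> ?O" using op open_contains_ball by blast
  define \<epsilon> where "\<epsilon> = r / (norm b + 1)"
  have ep: "\<epsilon> > 0" using r unfolding \<epsilon>_def by (intro divide_pos_pos) (auto intro: add_nonneg_pos)
  define g where "g t = inv_into (V \<inter> topspace M0) ?zs (?zs \<eta> + t *\<^sub>R b)" for t
  have inI: "?zs \<eta> + t *\<^sub>R b \<in> ?zs ` (V \<inter> topspace M0)" if t: "t \<in> {-\<epsilon><..<\<epsilon>}" for t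
  proof -
    have "\<bar>t\<bar> < \<epsilon>" using t by auto
    moreover have pos: "norm b + 1 > 0" by (simp add: add_nonneg_pos)
    ultimately have "\<bar>t\<bar> * (norm b + 1) < r"
      unfolding \<epsilon>_def using pos_less_divide_eq[OF pos] by blast
    moreover have "\<bar>t\<bar> * norm b \<le> \<bar>t\<bar> * (norm b + 1)" by (simp add: mult_left_mono)
    ultimately have "norm (t *\<^sub>R b) < r" by simp
    then have "?zs \<eta> + t *\<^sub>R b \<in> ball (?zs \<eta>) r" by (simp add: dist_norm)
    then show ?thesis using r by auto
  qed
  have gI: "g t \<in> V \<inter> topspace M0" "?zs (g t) = ?zs \<eta> + t *\<^sub>R b" if t: "t \<in> {-\<epsilon><..<\<epsilon>}" for t
  proof -
    have m: "?zs \<eta> + t *\<^sub>R b \<in> ?zs ` (V \<inter> topspace M0)" using inI[OF t] .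
    show "g t \<in> V \<inter> topspace M0" unfolding g_def by (rule inv_into_into[OF m])
    show "?zs (g t) = ?zs \<eta> + t *\<^sub>R b" unfolding g_def by (rule f_inv_into_f[OF m])
  qed
  have g0: "g 0 = \<eta>" unfolding g_def using inv_into_f_f[OF cfV(5)] V eta0 by simp
  have der: "((\<lambda>t. ?zs (g t)) has_vector_derivative b) (at x)" if x: "x \<in> {-\<epsilon><..<\<epsilon>}" for x
  proof -
    have "((\<lambda>t. ?zs \<eta> + t *\<^sub>R b) has_vector_derivative b) (at x)"
      by (auto intro!: derivative_eq_intros)
    then show ?thesis
      apply (rule has_vector_derivative_transform_within_open[where S="{-\<epsilon><..<\<epsilon>}"])
      using x gI(2) by auto
  qed
  have "curve0 M0 \<iota> \<eta> (V,\<psi>) g"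
    unfolding curve0_def C1_differentiable_on_def
    using g0 ep gI(1) der by (auto intro!: exI[of _ \<epsilon>] exI[of _ "\<lambda>_. b"])
  moreover have "((\<lambda>t. ?zs (g t)) has_vector_derivative b) (at 0)" using der ep by simp
  ultimately show ?thesis by blast
qed



lemma curve_unpack:
  assumes "curve0 M0 \<iota> \<eta> (U,\<phi>) f"
  shows "f 0 = \<eta> \<and> (\<exists>\<epsilon>>0. f ` {-\<epsilon><..<\<epsilon>} \<subseteq> U \<inter> topspace M0 \<and>
     (\<exists>a. ((\<lambda>t. inv \<iota> (\<phi> (f t))) has_vector_derivative a) (at 0)))"
proof -
  obtain \<epsilon> where e: "\<epsilon> > 0" "f ` {-\<epsilon><..<\<epsilon>} \<subseteq> U \<inter> topspace M0"
    "(\<lambda>t. inv \<iota> (\<phi> (f t))) C1_differentiable_on {-\<epsilon><..<\<epsilon>}" and f0: "f 0 = \<eta>"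
    using assms unfolding curve0_def by auto
  obtain D where "\<forall>x\<in>{-\<epsilon><..<\<epsilon>}. ((\<lambda>t. inv \<iota> (\<phi> (f t))) has_vector_derivative D x) (at x)"
    using e(3) unfolding C1_differentiable_on_def by blast
  then have "((\<lambda>t. inv \<iota> (\<phi> (f t))) has_vector_derivative D 0) (at 0)" using e(1) by simp
  then show ?thesis using e f0 by blast
qed

lemma deriv_lem:
  fixes G :: "'x::real_normed_vector \<Rightarrow> real"
  assumes d: "\<delta> > 0" "\<forall>t. \<bar>t\<bar> < \<delta> \<longrightarrow> f t \<in> W"
    and cd: "((\<lambda>t. ch (f t)) has_vector_derivative w) (at 0)" and f0: "f 0 = \<eta>"
    and G: "G differentiable (at (ch \<eta>))" and F: "\<forall>p\<in>W. F p = G (ch p)"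
  shows "deriv (\<lambda>t. F (f t)) 0 = frechet_derivative G (at (ch \<eta>)) w"
proof -
  let ?G' = "frechet_derivative G (at (ch \<eta>))"
  have Gd: "(G has_derivative ?G') (at ((\<lambda>t. ch (f t)) 0))"
    using G f0 frechet_derivative_works by auto
  have bl: "bounded_linear ?G'" using Gd has_derivative_bounded_linear by blast
  have "((G \<circ> (\<lambda>t. ch (f t))) has_derivative (?G' \<circ> (\<lambda>x. x *\<^sub>R w))) (at 0)"
    using diff_chain_at[OF cd[unfolded has_vector_derivative_def] Gd] .
  moreover have "?G' \<circ> (\<lambda>x. x *\<^sub>R w) = (\<lambda>x. ?G' w * x)"
    using linear_cmul[OF bounded_linear.linear[OF bl]] by (simp add: fun_eq_iff)
  ultimately have h: "((G \<circ> (\<lambda>t. ch (f t))) has_derivative (\<lambda>x. ?G' w * x)) (at 0)" by simp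
  have "((\<lambda>t. F (f t)) has_derivative (\<lambda>x. ?G' w * x)) (at 0)"
    apply (rule has_derivative_transform_within_open[OF h, where s="ball 0 \<delta>"])
    using d F by auto
  then have "((\<lambda>t. F (f t)) has_field_derivative ?G' w) (at 0)"
    unfolding has_field_derivative_def .
  then show ?thesis by (rule DERIV_imp_deriv)
qed

lemma TVeq:
  assumes K: "C1_embedded_submanifold M M0 \<iota> \<A>" and eta0: "\<eta> \<in> topspace M0"
    and U: "(U,\<phi>) \<in> \<A>" "\<eta> \<in> U" and cf: "curve0 M0 \<iota> \<eta> (U,\<phi>) f"
    and fa: "((\<lambda>t. inv \<iota> (\<phi> (f t))) has_vector_derivative a) (at 0)"
    and V: "(V,\<psi>) \<in> \<A>" "\<eta> \<in> V" and cg: "curve0 M0 \<iota> \<eta> (V,\<psi>) g"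
    and gb: "((\<lambda>t. inv \<iota> (\<psi> (g t))) has_vector_derivative b) (at 0)"
    and hyp: "\<forall>W ch. (W,ch) \<in> \<A> \<longrightarrow> \<eta> \<in> W \<longrightarrow> Dt \<iota> \<eta> U \<phi> ch a = Dt \<iota> \<eta> V \<psi> ch b"
  shows "tangent_vec \<A> \<eta> f = tangent_vec \<A> \<eta> g"
  unfolding tangent_vec_def
proof (rule ext)
  fix F
  show "(if suitable_fun \<A> \<eta> F then deriv (\<lambda>t. F (f t)) 0 else 0) =
        (if suitable_fun \<A> \<eta> F then deriv (\<lambda>t. F (g t)) 0 else 0)"
  proof (cases "suitable_fun \<A> \<eta> F")
    case False then show ?thesis by simp
  next
    case True
    then obtain W ch G where W: "(W,ch) \<in> \<A>" "\<eta> \<in> W" and G: "G differentiable (at (ch \<eta>))"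
      and FG: "\<forall>p\<in>W. F p = G (ch p)"
      unfolding suitable_fun_def by blast
    obtain \<epsilon>1 where f0: "f 0 = \<eta>" and e1: "\<epsilon>1 > 0" "f ` {-\<epsilon>1<..<\<epsilon>1} \<subseteq> U \<inter> topspace M0"
      using curve_unpack[OF cf] by blast
    obtain \<epsilon>2 where g0: "g 0 = \<eta>" and e2: "\<epsilon>2 > 0" "g ` {-\<epsilon>2<..<\<epsilon>2} \<subseteq> V \<inter> topspace M0"
      using curve_unpack[OF cg] by blast
    obtain \<delta>1 where d1: "\<delta>1 > 0" "\<forall>t. \<bar>t\<bar> < \<delta>1 \<longrightarrow> f t \<in> W"
      "((\<lambda>t. ch (f t)) has_vector_derivative Dt \<iota> \<eta> U \<phi> ch a) (at 0)"
      using TV[OF K eta0 U f0 e1 fa W] by blast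
    obtain \<delta>2 where d2: "\<delta>2 > 0" "\<forall>t. \<bar>t\<bar> < \<delta>2 \<longrightarrow> g t \<in> W"
      "((\<lambda>t. ch (g t)) has_vector_derivative Dt \<iota> \<eta> V \<psi> ch b) (at 0)"
      using TV[OF K eta0 V g0 e2 gb W] by blast
    have "deriv (\<lambda>t. F (f t)) 0 = frechet_derivative G (at (ch \<eta>)) (Dt \<iota> \<eta> U \<phi> ch a)"
      using deriv_lem[OF d1(1,2) d1(3) f0 G FG] .
    moreover have "deriv (\<lambda>t. F (g t)) 0 = frechet_derivative G (at (ch \<eta>)) (Dt \<iota> \<eta> V \<psi> ch b)"
      using deriv_lem[OF d2(1,2) d2(3) g0 G FG] .
    ultimately show ?thesis using hyp W by simp
  qed
qed

lemma T0_sub: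
  assumes K: "C1_embedded_submanifold M M0 \<iota> \<A>"
    and inward: "inner_C1_kernel M0 \<iota> \<A> M1 \<iota>1"
    and eta: "\<eta> \<in> topspace M1"
    and U: "(U, \<phi>) \<in> \<A>" "\<eta> \<in> U"
    and V: "(V, \<psi>) \<in> \<A>" "\<eta> \<in> V"
  shows "T0_chart M0 \<iota> \<A> \<eta> (U, \<phi>) \<subseteq> T0_chart M0 \<iota> \<A> \<eta> (V, \<psi>)"
proof
  have eta0: "\<eta> \<in> topspace M0" using eta inward unfolding inner_C1_kernel_def by auto
  obtain Kl where Kl: "\<forall>W ch. (W,ch) \<in> \<A> \<longrightarrow> \<eta> \<in> W \<longrightarrow>
            (\<forall>v. Dt \<iota> \<eta> U \<phi> ch v = Dt \<iota> \<eta> V \<psi> ch (Kl v))"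
    using CH[OF K inward eta U V] by blast
  fix x assume "x \<in> T0_chart M0 \<iota> \<A> \<eta> (U, \<phi>)"
  then obtain f where x: "x = tangent_vec \<A> \<eta> f" and cf: "curve0 M0 \<iota> \<eta> (U,\<phi>) f"
    unfolding T0_chart_def by blast
  obtain a where fa: "((\<lambda>t. inv \<iota> (\<phi> (f t))) has_vector_derivative a) (at 0)"
    using curve_unpack[OF cf] by blast
  obtain g where cg: "curve0 M0 \<iota> \<eta> (V,\<psi>) g"
    and gb: "((\<lambda>t. inv \<iota> (\<psi> (g t))) has_vector_derivative Kl a) (at 0)"
    using mkcurve[OF K eta0 V] by blast
  have "tangent_vec \<A> \<eta> f = tangent_vec \<A> \<eta> g"
    using TVeq[OF K eta0 U cf fa V cg gb] Kl by blast
  then show "x \<in> T0_chart M0 \<iota> \<A> \<eta> (V, \<psi>)" unfolding T0_chart_def using x cg by blast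
qed



theorem lemma3p7:
  fixes M M0 M1 Mt :: "'m topology"
    and \<iota> :: "'x0::banach \<Rightarrow> 'x::banach"
    and \<iota>1 :: "'x1::banach \<Rightarrow> 'x0"
    and \<kappa> :: "'x \<Rightarrow> 'xt::banach"
    and \<A> :: "('m set \<times> ('m \<Rightarrow> 'x)) set"
    and \<A>t :: "('m set \<times> ('m \<Rightarrow> 'xt)) set"
    and \<eta> :: 'm and U V :: "'m set" and \<phi> \<psi> :: "'m \<Rightarrow> 'x"
  assumes kernel: "C1_embedded_submanifold M M0 \<iota> \<A>"
    and inward: "inner_C1_kernel M0 \<iota> \<A> M1 \<iota>1"
    and outward: "outward_extension M \<A> Mt \<kappa> \<A>t"
    and eta: "\<eta> \<in> topspace M1"
    and U: "(U, \<phi>) \<in> \<A>" "\<eta> \<in> U"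
    and V: "(V, \<psi>) \<in> \<A>" "\<eta> \<in> V"
  shows "T0_chart M0 \<iota> \<A> \<eta> (U, \<phi>) = T0_chart M0 \<iota> \<A> \<eta> (V, \<psi>) \<and>
         T0 M0 \<iota> \<A> \<eta> = T0_chart M0 \<iota> \<A> \<eta> (U, \<phi>) \<and>
         T0_image M0 \<iota> \<A> \<eta> \<phi> = range \<iota>"
proof (intro conjI)
  have eta0: "\<eta> \<in> topspace M0" using eta inward unfolding inner_C1_kernel_def by auto
  show "T0_chart M0 \<iota> \<A> \<eta> (U, \<phi>) = T0_chart M0 \<iota> \<A> \<eta> (V, \<psi>)"
    using T0_sub[OF kernel inward eta U V] T0_sub[OF kernel inward eta V U] by blast
  have all: "T0_chart M0 \<iota> \<A> \<eta> c = T0_chart M0 \<iota> \<A> \<eta> (U, \<phi>)" if c: "c \<in> \<A>" "\<eta> \<in> fst c" for c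
  proof -
    obtain W ch where cw: "c = (W,ch)" by (cases c)
    have W: "(W,ch) \<in> \<A>" "\<eta> \<in> W" using c cw by auto
    show ?thesis using T0_sub[OF kernel inward eta U W] T0_sub[OF kernel inward eta W U] cw by blast
  qed
  show "T0 M0 \<iota> \<A> \<eta> = T0_chart M0 \<iota> \<A> \<eta> (U, \<phi>)"
  proof
    show "T0 M0 \<iota> \<A> \<eta> \<subseteq> T0_chart M0 \<iota> \<A> \<eta> (U, \<phi>)"
      unfolding T0_def using all by blast
    show "T0_chart M0 \<iota> \<A> \<eta> (U, \<phi>) \<subseteq> T0 M0 \<iota> \<A> \<eta>"
      unfolding T0_def using U by fastforce
  qed
  have sd: "Dt \<iota> \<eta> U \<phi> \<phi> = \<iota>" using self_deriv[OF kernel eta0 U] .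
  show "T0_image M0 \<iota> \<A> \<eta> \<phi> = range \<iota>"
  proof
    show "T0_image M0 \<iota> \<A> \<eta> \<phi> \<subseteq> range \<iota>"
    proof
      fix y assume "y \<in> T0_image M0 \<iota> \<A> \<eta> \<phi>"
      then obtain f c where y: "y = chart_tangent_map \<phi> f" and c: "c \<in> \<A>" "\<eta> \<in> fst c"
        and cf: "curve0 M0 \<iota> \<eta> c f"
        unfolding T0_image_def by blast
      obtain W ch where cw: "c = (W,ch)" by (cases c)
      have W: "(W,ch) \<in> \<A>" "\<eta> \<in> W" using c cw by auto
      have cf': "curve0 M0 \<iota> \<eta> (W,ch) f" using cf cw by simp
      obtain \<epsilon> a where f0: "f 0 = \<eta>" and e: "\<epsilon> > 0" "f ` {-\<epsilon><..<\<epsilon>} \<subseteq> W \<inter> topspace M0"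
        and fa: "((\<lambda>t. inv \<iota> (ch (f t))) has_vector_derivative a) (at 0)"
        using curve_unpack[OF cf'] by blast
      obtain \<delta> where "((\<lambda>t. \<phi> (f t)) has_vector_derivative Dt \<iota> \<eta> W ch \<phi> a) (at 0)"
        using TV[OF kernel eta0 W f0 e fa U] by blast
      then have y2: "y = Dt \<iota> \<eta> W ch \<phi> a"
        unfolding y chart_tangent_map_def by (rule vector_derivative_at)
      obtain Kl where Kl: "\<forall>W' ch'. (W',ch') \<in> \<A> \<longrightarrow> \<eta> \<in> W' \<longrightarrow>
            (\<forall>v. Dt \<iota> \<eta> W ch ch' v = Dt \<iota> \<eta> U \<phi> ch' (Kl v))"
        using CH[OF kernel inward eta W U] by blast
      have "y = \<iota> (Kl a)" using y2 Kl U sd by simp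
      then show "y \<in> range \<iota>" by blast
    qed
    show "range \<iota> \<subseteq> T0_image M0 \<iota> \<A> \<eta> \<phi>"
    proof
      fix y assume "y \<in> range \<iota>"
      then obtain x0 where y: "y = \<iota> x0" by blast
      obtain g where cg: "curve0 M0 \<iota> \<eta> (U,\<phi>) g"
        and gb: "((\<lambda>t. inv \<iota> (\<phi> (g t))) has_vector_derivative x0) (at 0)"
        using mkcurve[OF kernel eta0 U] by blast
      obtain \<epsilon> where g0: "g 0 = \<eta>" and e: "\<epsilon> > 0" "g ` {-\<epsilon><..<\<epsilon>} \<subseteq> U \<inter> topspace M0"
        using curve_unpack[OF cg] by blast
      obtain \<delta> where "((\<lambda>t. \<phi> (g t)) has_vector_derivative Dt \<iota> \<eta> U \<phi> \<phi> x0) (at 0)"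
        using TV[OF kernel eta0 U g0 e gb U] by blast
      then have ctm: "chart_tangent_map \<phi> g = y"
        unfolding chart_tangent_map_def y sd by (rule vector_derivative_at)
      show "y \<in> T0_image M0 \<iota> \<A> \<eta> \<phi>"
      proof -
        have "\<exists>c\<in>\<A>. \<eta> \<in> fst c \<and> curve0 M0 \<iota> \<eta> c g" using cg U by (intro bexI[of _ "(U,\<phi>)"]) auto
        then show ?thesis unfolding T0_image_def using \<open>chart_tangent_map \<phi> g = y\<close> by blast
      qed
    qed
  qed
qed

end
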